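(* Let $\Omega\subsetneq\mathbb{R}^{2n+1}$ be a nonempty open convex set (convex in the Euclidean sense; not necessarily bounded). For $\xi\in\Omega$ let $\hat\xi\in\partial\Omega$ be a point with $|\xi-\hat\xi|=\operatorname{dist}(\xi,\partial\Omega)$ and let $\nu(\xi)=(\hat\xi-\xi)/|\hat\xi-\xi|\in\mathbb{S}^{2n}$. Then for every $p\ge2$ and every $u\in C_0^\infty(\Omega)$, \[ \int_\Omega|\nabla_{\mathbb{H}^n}u|^p\,d\xi\ge\Bigl(\frac{p-1}{p}\Bigr)^p\int_\Omega\sum_{i=1}^n\frac{|\langle X_i(\xi),\nu(\xi)\rangle|^p+|\langle Y_i(\xi),\nu(\xi)\rangle|^p}{\operatorname{dist}(\xi,\partial\Omega)^p}|u|^p\,d\xi . \]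
   Context: $\mathbb{H}^n$ is $\mathbb{R}^{2n+1}$ with points $\xi=(x,y,t)$, $x,y\in\mathbb{R}^n$, $t\in\mathbb{R}$, and Lebesgue measure. For $1\le i\le n$, $X_i=\partial_{x_i}+2y_i\partial_t$, $Y_i=\partial_{y_i}-2x_i\partial_t$, identified with their coefficient vectors in $\mathbb{R}^{2n+1}$; $\langle\cdot,\cdot\rangle$ is the Euclidean inner product. $\nabla_{\mathbb{H}^n}u=(X_1u,\dots,X_nu,Y_1u,\dots,Y_nu)$ and $|\nabla_{\mathbb{H}^n}u|=\bigl(\sum_i(|X_iu|^2+|Y_iu|^2)\bigr)^{1/2}$. $\operatorname{dist}$ is Euclidean distance and $\mathbb{S}^{2n}$ the Euclidean unit sphere. Functions are real-valued. *)

theory Defs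
  imports "HOL-Analysis.Analysis"
begin

text \<open>Points of the Heisenberg group H^n = R^(2n+1), written (x, y, t) with
  x, y in R^n (index type 'n, n = CARD('n)) and t in R.\<close>
type_synonym 'n hpoint = "(real^'n) \<times> (real^'n) \<times> real"

text \<open>Coefficient vectors of the left-invariant fields
  X_i = d/dx_i + 2 y_i d/dt and Y_i = d/dy_i - 2 x_i d/dt.\<close>
definition hX :: "'n::finite \<Rightarrow> 'n hpoint \<Rightarrow> 'n hpoint" where
  "hX i p = (axis i 1, 0, 2 * (fst (snd p)) $ i)"

definition hY :: "'n::finite \<Rightarrow> 'n hpoint \<Rightarrow> 'n hpoint" where
  "hY i p = (0, axis i 1, - 2 * (fst p) $ i)"

definition hgrad_norm :: "('n::finite hpoint \<Rightarrow> real) \<Rightarrow> 'n hpoint \<Rightarrow> real" where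
  "hgrad_norm u p = sqrt (\<Sum>i\<in>UNIV. (frechet_derivative u (at p) (hX i p))\<^sup>2
                                   + (frechet_derivative u (at p) (hY i p))\<^sup>2)"

text \<open>C^infinity on the whole space: u belongs to a class of everywhere differentiable
  functions closed under taking directional derivatives.\<close>
definition smooth_fun :: "('a::euclidean_space \<Rightarrow> real) \<Rightarrow> bool" where
  "smooth_fun u \<longleftrightarrow> (\<exists>F. u \<in> F \<and> (\<forall>g\<in>F. (\<forall>x. g differentiable (at x)) \<and>
        (\<forall>v. (\<lambda>x. frechet_derivative g (at x) v) \<in> F)))"

text \<open>C_0^infinity(Omega), functions extended by zero outside Omega.\<close>
definition Cc_infty :: "'a::euclidean_space set \<Rightarrow> ('a \<Rightarrow> real) set" where
  "Cc_infty \<Omega> = {u. smooth_fun u \<and> compact (closure {x. u x \<noteq> 0})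
                     \<and> closure {x. u x \<noteq> 0} \<subseteq> \<Omega>}"

end

theory Submission
  imports Defs
begin

lemma transl_inv:
  fixes G :: "'a::euclidean_space \<Rightarrow> ennreal"
  assumes [measurable]: "G \<in> borel_measurable borel"
  shows "(\<integral>\<^sup>+x. G (x + v) \<partial>lborel) = (\<integral>\<^sup>+x. G x \<partial>lborel)"
proof -
  have "(\<integral>\<^sup>+x. G x \<partial>lborel) = (\<integral>\<^sup>+x. G x \<partial>(distr lborel borel ((+) v)))"
    by (simp add: lborel_distr_plus)
  also have "\<dots> = (\<integral>\<^sup>+x. G (v + x) \<partial>lborel)"
    by (subst nn_integral_distr) auto
  finally show ?thesis by (simp add: add.commute)
qed

lemma int_unit_ind:
  "(\<integral>\<^sup>+s. indicator {a - 1..a} (s::real) \<partial>lborel) = 1"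
  by simp

definition slab :: "'a::euclidean_space \<Rightarrow> 'a set" where
  "slab b = {x. 0 \<le> x \<bullet> b \<and> x \<bullet> b \<le> 1}"

lemma slab_borel[measurable]: "slab b \<in> sets borel"
  unfolding slab_def by measurable

lemma avg_const:
  fixes h :: "'a::euclidean_space \<Rightarrow> ennreal" and b :: 'a
  assumes [measurable]: "h \<in> borel_measurable borel" and bb: "b \<bullet> b = 1"
  shows "(\<integral>\<^sup>+x. h x \<partial>lborel) =
     (\<integral>\<^sup>+x. indicator (slab b) x * (\<integral>\<^sup>+s. h (x + s *\<^sub>R b) \<partial>lborel) \<partial>lborel)"
proof -
  have "(\<integral>\<^sup>+x. indicator (slab b) x * (\<integral>\<^sup>+s. h (x + s *\<^sub>R b) \<partial>lborel) \<partial>lborel)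
      = (\<integral>\<^sup>+x. (\<integral>\<^sup>+s. indicator (slab b) x * h (x + s *\<^sub>R b) \<partial>lborel) \<partial>lborel)"
    by (intro nn_integral_cong nn_integral_cmult[symmetric]) measurable
  also have "\<dots> = (\<integral>\<^sup>+s. (\<integral>\<^sup>+x. indicator (slab b) x * h (x + s *\<^sub>R b) \<partial>lborel) \<partial>lborel)"
    by (rule lborel_pair.Fubini'[symmetric]) measurable
  also have "\<dots> = (\<integral>\<^sup>+s. (\<integral>\<^sup>+x. indicator (slab b) (x - s *\<^sub>R b) * h x \<partial>lborel) \<partial>lborel)"
  proof (rule nn_integral_cong)
    fix s :: real
    show "(\<integral>\<^sup>+x. indicator (slab b) x * h (x + s *\<^sub>R b) \<partial>lborel) =
          (\<integral>\<^sup>+x. indicator (slab b) (x - s *\<^sub>R b) * h x \<partial>lborel)"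
      using transl_inv[of "\<lambda>x. indicator (slab b) (x - s *\<^sub>R b) * h x" "s *\<^sub>R b"] by simp
  qed
  also have "\<dots> = (\<integral>\<^sup>+x. (\<integral>\<^sup>+s. indicator (slab b) (x - s *\<^sub>R b) * h x \<partial>lborel) \<partial>lborel)"
    by (rule lborel_pair.Fubini') measurable
  also have "\<dots> = (\<integral>\<^sup>+x. h x \<partial>lborel)"
  proof (rule nn_integral_cong)
    fix x :: 'a
    have "(\<integral>\<^sup>+s. indicator (slab b) (x - s *\<^sub>R b) * h x \<partial>lborel)
        = (\<integral>\<^sup>+s. indicator {x \<bullet> b - 1..x \<bullet> b} s * h x \<partial>lborel)"
      by (intro nn_integral_cong) (auto simp: slab_def indicator_def inner_diff_left bb)
    also have "\<dots> = h x"
      by (subst nn_integral_multc) auto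
    finally show "(\<integral>\<^sup>+s. indicator (slab b) (x - s *\<^sub>R b) * h x \<partial>lborel) = h x" .
  qed
  finally show ?thesis by simp
qed

lemma shear_inv:
  fixes G :: "'a::euclidean_space \<Rightarrow> ennreal" and c :: 'a
  assumes [measurable]: "G \<in> borel_measurable borel" "\<beta> \<in> borel_measurable borel"
    and cc: "c \<bullet> c = 1" and inv: "\<And>x t. \<beta> (x + t *\<^sub>R c) = \<beta> x"
  shows "(\<integral>\<^sup>+x. G (x + \<beta> x *\<^sub>R c) \<partial>lborel) = (\<integral>\<^sup>+x. G x \<partial>lborel)"
proof -
  have "(\<integral>\<^sup>+x. G (x + \<beta> x *\<^sub>R c) \<partial>lborel) =
     (\<integral>\<^sup>+x. indicator (slab c) x * (\<integral>\<^sup>+t. G ((x + t *\<^sub>R c) + \<beta> (x + t *\<^sub>R c) *\<^sub>R c) \<partial>lborel) \<partial>lborel)"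
    by (rule avg_const[OF _ cc]) measurable
  also have "\<dots> = (\<integral>\<^sup>+x. indicator (slab c) x * (\<integral>\<^sup>+t. G (x + t *\<^sub>R c) \<partial>lborel) \<partial>lborel)"
  proof (rule nn_integral_cong)
    fix x
    have "(\<integral>\<^sup>+t. G ((x + t *\<^sub>R c) + \<beta> (x + t *\<^sub>R c) *\<^sub>R c) \<partial>lborel)
       = (\<integral>\<^sup>+t. G (x + (\<beta> x + 1 * t) *\<^sub>R c) \<partial>lborel)"
      by (intro nn_integral_cong) (simp add: inv algebra_simps)
    also have "\<dots> = (\<integral>\<^sup>+t. G (x + t *\<^sub>R c) \<partial>lborel)"
      using nn_integral_real_affine[of "\<lambda>t. G (x + t *\<^sub>R c)" 1 "\<beta> x"] by simp
    finally show "indicator (slab c) x * (\<integral>\<^sup>+t. G ((x + t *\<^sub>R c) + \<beta> (x + t *\<^sub>R c) *\<^sub>R c) \<partial>lborel)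
       = indicator (slab c) x * (\<integral>\<^sup>+t. G (x + t *\<^sub>R c) \<partial>lborel)" by simp
  qed
  also have "\<dots> = (\<integral>\<^sup>+x. G x \<partial>lborel)"
    by (rule avg_const[symmetric, OF _ cc]) measurable
  finally show ?thesis .
qed

lemma line_decomp:
  fixes h :: "'a::euclidean_space \<Rightarrow> ennreal" and b c e :: 'a
  assumes [measurable]: "h \<in> borel_measurable borel"
    and bb: "b \<bullet> b = 1" and cc: "c \<bullet> c = 1" and bc: "b \<bullet> c = 0" and be: "b \<bullet> e = 0"
    and ce: "c \<bullet> e = 0"
  shows "(\<integral>\<^sup>+x. h x \<partial>lborel) =
     (\<integral>\<^sup>+x. indicator (slab b) x * (\<integral>\<^sup>+s. h (x + s *\<^sub>R (b + (\<alpha> * (x \<bullet> e)) *\<^sub>R c)) \<partial>lborel) \<partial>lborel)"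
proof -
  have "(\<integral>\<^sup>+x. indicator (slab b) x * (\<integral>\<^sup>+s. h (x + s *\<^sub>R (b + (\<alpha> * (x \<bullet> e)) *\<^sub>R c)) \<partial>lborel) \<partial>lborel)
      = (\<integral>\<^sup>+x. (\<integral>\<^sup>+s. indicator (slab b) x * h (x + s *\<^sub>R (b + (\<alpha> * (x \<bullet> e)) *\<^sub>R c)) \<partial>lborel) \<partial>lborel)"
    by (intro nn_integral_cong nn_integral_cmult[symmetric]) measurable
  also have "\<dots> = (\<integral>\<^sup>+s. (\<integral>\<^sup>+x. indicator (slab b) x * h (x + s *\<^sub>R (b + (\<alpha> * (x \<bullet> e)) *\<^sub>R c)) \<partial>lborel) \<partial>lborel)"
    by (rule lborel_pair.Fubini'[symmetric]) measurable
  also have "\<dots> = (\<integral>\<^sup>+s. (\<integral>\<^sup>+x. indicator (slab b) (x - s *\<^sub>R b) * h x \<partial>lborel) \<partial>lborel)"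
  proof (rule nn_integral_cong)
    fix s :: real
    have "(\<integral>\<^sup>+x. indicator (slab b) x * h (x + s *\<^sub>R (b + (\<alpha> * (x \<bullet> e)) *\<^sub>R c)) \<partial>lborel)
       = (\<integral>\<^sup>+x. indicator (slab b) ((x + s *\<^sub>R b) - s *\<^sub>R b) * h ((x + s *\<^sub>R b) + (s * \<alpha> * ((x + s *\<^sub>R b) \<bullet> e)) *\<^sub>R c) \<partial>lborel)"
      by (intro nn_integral_cong) (simp add: algebra_simps inner_add_left be)
    also have "\<dots> = (\<integral>\<^sup>+y. indicator (slab b) (y - s *\<^sub>R b) * h (y + (s * \<alpha> * (y \<bullet> e)) *\<^sub>R c) \<partial>lborel)"
      by (rule transl_inv[of "\<lambda>y. indicator (slab b) (y - s *\<^sub>R b) * h (y + (s * \<alpha> * (y \<bullet> e)) *\<^sub>R c)"]) measurable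
    also have "\<dots> = (\<integral>\<^sup>+y. indicator (slab b) ((y + (s * \<alpha> * (y \<bullet> e)) *\<^sub>R c) - s *\<^sub>R b) * h (y + (s * \<alpha> * (y \<bullet> e)) *\<^sub>R c) \<partial>lborel)"
      by (intro nn_integral_cong) (simp add: slab_def indicator_def inner_add_left inner_diff_left bc inner_commute[of c b])
    also have "\<dots> = (\<integral>\<^sup>+y. indicator (slab b) (y - s *\<^sub>R b) * h y \<partial>lborel)"
      by (rule shear_inv[of "\<lambda>y. indicator (slab b) (y - s *\<^sub>R b) * h y" "\<lambda>y. s * \<alpha> * (y \<bullet> e)", OF _ _ cc])
         (simp_all add: inner_add_left ce)
    finally show "(\<integral>\<^sup>+x. indicator (slab b) x * h (x + s *\<^sub>R (b + (\<alpha> * (x \<bullet> e)) *\<^sub>R c)) \<partial>lborel)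
       = (\<integral>\<^sup>+y. indicator (slab b) (y - s *\<^sub>R b) * h y \<partial>lborel)" .
  qed
  also have "\<dots> = (\<integral>\<^sup>+x. (\<integral>\<^sup>+s. indicator (slab b) (x - s *\<^sub>R b) * h x \<partial>lborel) \<partial>lborel)"
    by (rule lborel_pair.Fubini') measurable
  also have "\<dots> = (\<integral>\<^sup>+x. h x \<partial>lborel)"
  proof (rule nn_integral_cong)
    fix x :: 'a
    have "(\<integral>\<^sup>+s. indicator (slab b) (x - s *\<^sub>R b) * h x \<partial>lborel)
        = (\<integral>\<^sup>+s. indicator {x \<bullet> b - 1..x \<bullet> b} s * h x \<partial>lborel)"
      by (intro nn_integral_cong) (auto simp: slab_def indicator_def inner_diff_left bb)
    also have "\<dots> = h x"
      by (subst nn_integral_multc) auto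
    finally show "(\<integral>\<^sup>+s. indicator (slab b) (x - s *\<^sub>R b) * h x \<partial>lborel) = h x" .
  qed
  finally show ?thesis by simp
qed

lemma abs_powr_deriv:
  fixes p x :: real
  assumes p: "p > 1"
  shows "((\<lambda>x. \<bar>x\<bar> powr p) has_real_derivative (p * \<bar>x\<bar> powr (p-1) * sgn x)) (at x)"
proof (cases "x = 0")
  case True
  have "((\<lambda>y. (\<bar>y\<bar> powr p - \<bar>0\<bar> powr p) / (y - 0)) \<longlongrightarrow> 0) (at (0::real))"
  proof (rule Lim_null_comparison)
    show "\<forall>\<^sub>F y in at 0. norm ((\<bar>y\<bar> powr p - \<bar>0\<bar> powr p) / (y - 0)) \<le> \<bar>y\<bar> powr (p-1)"
    proof (rule eventually_at_filter[THEN iffD2], rule always_eventually, intro allI impI)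
      fix y :: real assume "y \<noteq> 0"
      then show "norm ((\<bar>y\<bar> powr p - \<bar>0\<bar> powr p) / (y - 0)) \<le> \<bar>y\<bar> powr (p-1)"
        by (simp add: powr_diff abs_divide)
    qed
    show "((\<lambda>y. \<bar>y\<bar> powr (p-1)) \<longlongrightarrow> 0) (at (0::real))"
      using p by (intro tendsto_zero_powrI) (auto intro!: tendsto_eq_intros)
  qed
  then show ?thesis using True by (simp add: has_field_derivative_iff)
next
  case False
  show ?thesis
  proof (cases "x > 0")
    case True
    have ev: "\<forall>\<^sub>F y in nhds x. \<bar>y\<bar> powr p = y powr p"
      using eventually_nhds_in_open[of "{0<..}" x] True
      by (auto elim!: eventually_mono)
    have "((\<lambda>y. y powr p) has_real_derivative p * x powr (p-1)) (at x)"
      by (rule has_real_derivative_powr) (use True in simp)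
    then show ?thesis using DERIV_cong_ev[OF refl ev refl] True by simp
  next
    case False
    with \<open>x \<noteq> 0\<close> have neg: "x < 0" by simp
    have ev: "\<forall>\<^sub>F y in nhds x. \<bar>y\<bar> powr p = (-y) powr p"
      using eventually_nhds_in_open[of "{..<0}" x] neg
      by (auto elim!: eventually_mono)
    have "((\<lambda>y. (-y) powr p) has_real_derivative p * (-x) powr (p-1) * (-1)) (at x)"
      using neg by (auto intro!: derivative_eq_intros)
    then show ?thesis using DERIV_cong_ev[OF refl ev refl] neg by simp
  qed
qed

lemma pw_ineq:
  fixes p x y t :: real
  assumes p: "p > 1" and x: "x \<ge> 0" and t: "t > 0"
  defines "k \<equiv> ((p-1)/p) powr (p-1)" and "c \<equiv> ((p-1)/p) powr p"
  shows "p * x powr (p-1) * y * (k * t powr (1-p)) + x powr p * (k*(1-p)*t powr (-p))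
           + c * (x powr p / t powr p) \<le> \<bar>y\<bar> powr p"
proof -
  define q where "q = p/(p-1)"
  define r where "r = (p-1)/p"
  have r: "r > 0" using p by (simp add: r_def)
  have q1: "q > 1" using p by (simp add: q_def)
  have pq: "1/p + 1/q = 1" using p by (simp add: q_def field_simps)
  define B where "B = x powr (p-1) * (k * t powr (1-p))"
  have k0: "k \<ge> 0" by (simp add: k_def)
  have B0: "B \<ge> 0" using x k0 t by (simp add: B_def)
  have Y: "\<bar>y\<bar> * B \<le> \<bar>y\<bar> powr p / p + B powr q / q"
    by (rule Youngs_inequality[OF p q1 pq]) (use B0 in auto)
  have e1: "(p-1) * q = p" using p by (simp add: q_def)
  have e2: "(1-p) * q = -p" using p by (simp add: q_def field_simps)
  have Bq: "B powr q = x powr p * c * t powr (-p)"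
  proof -
    have "B powr q = (x powr (p-1)) powr q * (k powr q * (t powr (1-p)) powr q)"
      unfolding B_def using x k0 t by (simp add: powr_mult)
    also have "\<dots> = x powr p * (c * t powr (-p))"
      unfolding k_def c_def by (simp add: powr_powr e1 e2)
    finally show ?thesis by simp
  qed
  have pc: "p * c = (p-1) * k"
  proof -
    have "c = r * r powr (p-1)" unfolding c_def r_def[symmetric]
      using r powr_add[of r 1 "p-1"] by simp
    then show ?thesis unfolding k_def r_def[symmetric] using p by (simp add: r_def)
  qed
  have "p * x powr (p-1) * y * (k * t powr (1-p)) \<le> p * (\<bar>y\<bar> * B)"
  proof -
    have "p * x powr (p-1) * y * (k * t powr (1-p)) = p * (y * B)" by (simp add: B_def)
    also have "\<dots> \<le> p * (\<bar>y\<bar> * B)" using p B0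
      by (intro mult_left_mono mult_right_mono) auto
    finally show ?thesis .
  qed
  also have "\<dots> \<le> p * (\<bar>y\<bar> powr p / p + B powr q / q)"
    by (rule mult_left_mono[OF Y]) (use p in simp)
  also have "\<dots> = \<bar>y\<bar> powr p + (p/q) * B powr q"
    using p by (simp add: field_simps)
  also have "(p/q) = p - 1" using p by (simp add: q_def)
  finally have A: "p * x powr (p-1) * y * (k * t powr (1-p)) \<le> \<bar>y\<bar> powr p + (p-1) * (x powr p * c * t powr (-p))"
    using Bq by simp
  have D: "x powr p / t powr p = x powr p * t powr (-p)"
    by (simp add: powr_minus_divide)
  have "(p-1) * (x powr p * c * t powr (-p)) + x powr p * (k*(1-p)*t powr (-p)) + c * (x powr p * t powr (-p))
      = x powr p * t powr (-p) * (p * c - (p-1) * k)"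
    by (simp add: algebra_simps)
  also have "\<dots> = 0" using pc by simp
  finally have Z: "(p-1) * (x powr p * c * t powr (-p)) + x powr p * (k*(1-p)*t powr (-p)) + c * (x powr p * t powr (-p)) = 0" .
  show ?thesis unfolding D using A Z by linarith
qed

lemma left_hardy:
  fixes f f' :: "real \<Rightarrow> real" and p a \<alpha> m :: real
  assumes p: "p > 1" and a: "a < \<alpha>" and am: "\<alpha> \<le> m"
    and df: "\<And>s. (f has_real_derivative f' s) (at s)"
    and cf': "continuous_on {\<alpha>..m} f'"
    and f0: "f \<alpha> = 0"
  shows "((p-1)/p) powr p * integral {\<alpha>..m} (\<lambda>s. \<bar>f s\<bar> powr p / (s - a) powr p)
           \<le> integral {\<alpha>..m} (\<lambda>s. \<bar>f' s\<bar> powr p)"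
proof -
  define k where "k = ((p-1)/p) powr (p-1)"
  define c where "c = ((p-1)/p) powr p"
  define G where "G s = \<bar>f s\<bar> powr p * (k * (s - a) powr (1-p))" for s
  define G' where "G' s = p * \<bar>f s\<bar> powr (p-1) * (sgn (f s) * f' s) * (k * (s - a) powr (1-p))
      + \<bar>f s\<bar> powr p * (k * (1-p) * (s - a) powr (-p))" for s
  define H where "H s = \<bar>f' s\<bar> powr p - c * (\<bar>f s\<bar> powr p / (s - a) powr p)" for s
  have cf: "continuous_on {\<alpha>..m} f"
    using df by (intro continuous_at_imp_continuous_on ballI DERIV_isCont) auto
  have dG: "(G has_real_derivative G' s) (at s)" if s: "s \<in> {\<alpha>..m}" for s
  proof -
    have sa: "s - a > 0" using s a by auto
    have d1: "((\<lambda>s. \<bar>f s\<bar> powr p) has_real_derivative (p * \<bar>f s\<bar> powr (p-1) * sgn (f s)) * f' s) (at s)"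
      by (rule DERIV_chain2[OF abs_powr_deriv[OF p] df])
    have d2: "((\<lambda>s. k * (s - a) powr (1-p)) has_real_derivative k * ((1-p) * (s - a) powr (1 - p - 1))) (at s)"
      using sa by (auto intro!: derivative_eq_intros)
    have e: "1 - p - 1 = -p" by simp
    show ?thesis unfolding G_def G'_def
      using DERIV_mult[OF d1 d2] unfolding e by (simp add: algebra_simps)
  qed
  have FTC: "(G' has_integral (G m - G \<alpha>)) {\<alpha>..m}"
    by (rule fundamental_theorem_of_calculus[OF am])
       (auto intro!: DERIV_subset[OF dG] simp: has_real_derivative_iff_has_vector_derivative[symmetric])
  have c1: "continuous_on {\<alpha>..m} (\<lambda>s. \<bar>f' s\<bar> powr p)"
    using p by (intro continuous_on_powr' continuous_intros cf') auto
  have c2: "continuous_on {\<alpha>..m} (\<lambda>s. \<bar>f s\<bar> powr p / (s - a) powr p)"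
    using p a by (intro continuous_on_powr' continuous_intros cf) auto
  have i1: "(\<lambda>s. \<bar>f' s\<bar> powr p) integrable_on {\<alpha>..m}" by (rule integrable_continuous_interval[OF c1])
  have i2: "(\<lambda>s. \<bar>f s\<bar> powr p / (s - a) powr p) integrable_on {\<alpha>..m}" by (rule integrable_continuous_interval[OF c2])
  have iH: "(H has_integral (integral {\<alpha>..m} (\<lambda>s. \<bar>f' s\<bar> powr p) - c * integral {\<alpha>..m} (\<lambda>s. \<bar>f s\<bar> powr p / (s - a) powr p))) {\<alpha>..m}"
    unfolding H_def by (intro has_integral_diff has_integral_mult_right integrable_integral i1 i2)
  have le: "G' s \<le> H s" if s: "s \<in> {\<alpha>..m}" for s
  proof -
    have sa: "s - a > 0" using s a by auto
    have "G' s + c * (\<bar>f s\<bar> powr p / (s - a) powr p) \<le> \<bar>sgn (f s) * f' s\<bar> powr p"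
      unfolding G'_def using pw_ineq[OF p _ sa, of "\<bar>f s\<bar>" "sgn (f s) * f' s"]
      by (simp add: k_def c_def)
    also have "\<dots> \<le> \<bar>f' s\<bar> powr p"
      using p by (intro powr_mono2) (auto simp: abs_mult sgn_if)
    finally show ?thesis unfolding H_def by simp
  qed
  have "G m - G \<alpha> \<le> integral {\<alpha>..m} (\<lambda>s. \<bar>f' s\<bar> powr p) - c * integral {\<alpha>..m} (\<lambda>s. \<bar>f s\<bar> powr p / (s - a) powr p)"
    by (rule has_integral_le[OF FTC iH le])
  moreover have "G \<alpha> = 0" using f0 p by (simp add: G_def)
  moreover have "G m \<ge> 0" using am a by (simp add: G_def k_def)
  ultimately show ?thesis unfolding c_def by simp
qed

lemma right_hardy:
  fixes f f' :: "real \<Rightarrow> real" and p b \<beta> m :: real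
  assumes p: "p > 1" and b: "\<beta> < b" and am: "m \<le> \<beta>"
    and df: "\<And>s. (f has_real_derivative f' s) (at s)"
    and cf': "continuous_on {m..\<beta>} f'"
    and f0: "f \<beta> = 0"
  shows "((p-1)/p) powr p * integral {m..\<beta>} (\<lambda>s. \<bar>f s\<bar> powr p / (b - s) powr p)
           \<le> integral {m..\<beta>} (\<lambda>s. \<bar>f' s\<bar> powr p)"
proof -
  have df2: "((\<lambda>s. f (-s)) has_real_derivative - f' (-s)) (at s)" for s
  proof -
    have "((\<lambda>s. f (-s)) has_real_derivative f' (-s) * -1) (at s)"
    using DERIV_chain2[where f=f and g=uminus and x=s and Da="f' (-s)" and Db="-1" and s=UNIV, OF df[of "-s"]]
    using DERIV_minus[OF DERIV_ident] by blast
    then show ?thesis by simp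
  qed
  have cf2: "continuous_on {-\<beta>..-m} (\<lambda>s. - f' (-s))"
    by (intro continuous_intros continuous_on_compose2[OF cf']) auto
  have "((p-1)/p) powr p * integral {-\<beta>..-m} (\<lambda>s. \<bar>f (-s)\<bar> powr p / (s - (-b)) powr p)
           \<le> integral {-\<beta>..-m} (\<lambda>s. \<bar>- f' (-s)\<bar> powr p)"
    by (rule left_hardy[OF p _ _ df2 cf2]) (use b am f0 in auto)
  moreover have "integral {-\<beta>..-m} (\<lambda>s. \<bar>f (-s)\<bar> powr p / (s - (-b)) powr p)
     = integral {m..\<beta>} (\<lambda>s. \<bar>f s\<bar> powr p / (b - s) powr p)"
    using Henstock_Kurzweil_Integration.integral_reflect_real[of \<beta> m "\<lambda>s. \<bar>f s\<bar> powr p / (b - s) powr p"]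
    by (simp add: add.commute)
  moreover have "integral {-\<beta>..-m} (\<lambda>s. \<bar>- f' (-s)\<bar> powr p) = integral {m..\<beta>} (\<lambda>s. \<bar>f' s\<bar> powr p)"
    using Henstock_Kurzweil_Integration.integral_reflect_real[of \<beta> m "\<lambda>s. \<bar>f' s\<bar> powr p"]
    by simp
  ultimately show ?thesis by simp
qed

lemma hardy_interval:
  fixes f f' :: "real \<Rightarrow> real" and w :: "real \<Rightarrow> ennreal" and p a b \<alpha> \<beta> m :: real
  assumes p: "p > 1" and a: "a < \<alpha>" and am: "\<alpha> \<le> m" and mb: "m \<le> \<beta>" and b: "\<beta> < b"
    and df: "\<And>s. (f has_real_derivative f' s) (at s)"
    and cf': "continuous_on UNIV f'"
    and f0: "f \<alpha> = 0" "f \<beta> = 0"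
    and wb: "\<And>s. s \<in> {\<alpha>..\<beta>} \<Longrightarrow> w s \<le> ennreal (indicator {\<alpha>..m} s * (\<bar>f s\<bar> powr p / (s - a) powr p)
               + indicator {m..\<beta>} s * (\<bar>f s\<bar> powr p / (b - s) powr p))"
  shows "ennreal (((p-1)/p) powr p) * (\<integral>\<^sup>+s. indicator {\<alpha>..\<beta>} s * w s \<partial>lborel)
          \<le> (\<integral>\<^sup>+s. indicator {\<alpha>..\<beta>} s * ennreal (\<bar>f' s\<bar> powr p) \<partial>lborel)"
proof -
  define c where "c = ((p-1)/p) powr p"
  define L where "L s = \<bar>f s\<bar> powr p / (s - a) powr p" for s
  define R where "R s = \<bar>f s\<bar> powr p / (b - s) powr p" for s
  define D where "D s = \<bar>f' s\<bar> powr p" for s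
  have cf: "continuous_on UNIV f"
    using df by (intro continuous_at_imp_continuous_on ballI DERIV_isCont) auto
  have cL: "continuous_on {\<alpha>..m} L"
    unfolding L_def using p a
    by (intro continuous_on_powr' continuous_intros continuous_on_subset[OF cf]) auto
  have cR: "continuous_on {m..\<beta>} R"
    unfolding R_def using p b
    by (intro continuous_on_powr' continuous_intros continuous_on_subset[OF cf]) auto
  have cD: "continuous_on UNIV D"
    unfolding D_def using p
    by (intro continuous_on_powr' continuous_intros cf') auto
  have iL: "(L has_integral integral {\<alpha>..m} L) {\<alpha>..m}"
    by (intro integrable_integral integrable_continuous_interval cL)
  have iR: "(R has_integral integral {m..\<beta>} R) {m..\<beta>}"
    by (intro integrable_integral integrable_continuous_interval cR)
  have iD: "(D has_integral integral {\<alpha>..\<beta>} D) {\<alpha>..\<beta>}"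
    by (intro integrable_integral integrable_continuous_interval continuous_on_subset[OF cD]) auto
  have L0: "\<And>s. 0 \<le> L s" and R0: "\<And>s. 0 \<le> R s" and D0: "\<And>s. 0 \<le> D s"
    by (auto simp: L_def R_def D_def)
  have nL: "(\<integral>\<^sup>+s. ennreal (indicator {\<alpha>..m} s * L s) \<partial>lborel) = ennreal (integral {\<alpha>..m} L)"
    by (rule nn_integral_has_integral_lebesgue[OF _ iL]) (simp add: L0)
  have nR: "(\<integral>\<^sup>+s. ennreal (indicator {m..\<beta>} s * R s) \<partial>lborel) = ennreal (integral {m..\<beta>} R)"
    by (rule nn_integral_has_integral_lebesgue[OF _ iR]) (simp add: R0)
  have nD: "(\<integral>\<^sup>+s. ennreal (indicator {\<alpha>..\<beta>} s * D s) \<partial>lborel) = ennreal (integral {\<alpha>..\<beta>} D)"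
    by (rule nn_integral_has_integral_lebesgue[OF _ iD]) (simp add: D0)
  have mL: "(\<lambda>s. indicator {\<alpha>..m} s * L s) \<in> borel_measurable borel"
    using borel_measurable_continuous_on_indicator[OF _ cL] by simp
  have mR: "(\<lambda>s. indicator {m..\<beta>} s * R s) \<in> borel_measurable borel"
    using borel_measurable_continuous_on_indicator[OF _ cR] by simp
  have "(\<integral>\<^sup>+s. indicator {\<alpha>..\<beta>} s * w s \<partial>lborel)
      \<le> (\<integral>\<^sup>+s. ennreal (indicator {\<alpha>..m} s * L s) + ennreal (indicator {m..\<beta>} s * R s) \<partial>lborel)"
  proof (rule nn_integral_mono)
    fix s :: real
    show "indicator {\<alpha>..\<beta>} s * w s \<le> ennreal (indicator {\<alpha>..m} s * L s) + ennreal (indicator {m..\<beta>} s * R s)"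
    proof (cases "s \<in> {\<alpha>..\<beta>}")
      case True
      then show ?thesis using wb[OF True] L0 R0
        by (simp add: L_def R_def ennreal_plus[symmetric] del: ennreal_plus)
    qed simp
  qed
  also have "\<dots> = ennreal (integral {\<alpha>..m} L) + ennreal (integral {m..\<beta>} R)"
    by (subst nn_integral_add) (use mL mR nL nR in auto)
  finally have A0: "(\<integral>\<^sup>+s. indicator {\<alpha>..\<beta>} s * w s \<partial>lborel)
      \<le> ennreal (integral {\<alpha>..m} L) + ennreal (integral {m..\<beta>} R)" .
  have IL0: "0 \<le> integral {\<alpha>..m} L" by (rule integral_nonneg) (auto intro: integrable_continuous_interval cL simp: L0)
  have IR0: "0 \<le> integral {m..\<beta>} R" by (rule integral_nonneg) (auto intro: integrable_continuous_interval cR simp: R0)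
  have A: "(\<integral>\<^sup>+s. indicator {\<alpha>..\<beta>} s * w s \<partial>lborel)
      \<le> ennreal (integral {\<alpha>..m} L + integral {m..\<beta>} R)"
    using A0 IL0 IR0 by (subst ennreal_plus) auto
  have "c * integral {\<alpha>..m} L \<le> integral {\<alpha>..m} D"
    unfolding c_def L_def D_def
    by (rule left_hardy[OF p a am df continuous_on_subset[OF cf'] f0(1)]) auto
  moreover have "c * integral {m..\<beta>} R \<le> integral {m..\<beta>} D"
    unfolding c_def R_def D_def
    by (rule right_hardy[OF p b mb df continuous_on_subset[OF cf'] f0(2)]) auto
  moreover have "integral {\<alpha>..m} D + integral {m..\<beta>} D = integral {\<alpha>..\<beta>} D"
    by (rule Henstock_Kurzweil_Integration.integral_combine[OF am mb])
       (intro integrable_continuous_interval continuous_on_subset[OF cD], auto)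
  ultimately have B: "c * (integral {\<alpha>..m} L + integral {m..\<beta>} R) \<le> integral {\<alpha>..\<beta>} D"
    by (simp add: distrib_left)
  have c0: "c \<ge> 0" by (simp add: c_def)
  have "ennreal c * (\<integral>\<^sup>+s. indicator {\<alpha>..\<beta>} s * w s \<partial>lborel)
      \<le> ennreal c * ennreal (integral {\<alpha>..m} L + integral {m..\<beta>} R)"
    by (rule mult_left_mono[OF A]) simp
  also have "\<dots> = ennreal (c * (integral {\<alpha>..m} L + integral {m..\<beta>} R))"
    using c0 IL0 IR0 by (simp add: ennreal_mult)
  also have "\<dots> \<le> ennreal (integral {\<alpha>..\<beta>} D)"
    using B by (rule ennreal_leI)
  also have "\<dots> = (\<integral>\<^sup>+s. indicator {\<alpha>..\<beta>} s * ennreal (\<bar>f' s\<bar> powr p) \<partial>lborel)"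
    unfolding nD[symmetric] D_def
    by (intro nn_integral_cong) (simp add: indicator_def)
  finally show ?thesis unfolding c_def .
qed

lemma deriv_zero_outside:
  fixes f f' :: "real \<Rightarrow> real"
  assumes df: "(f has_real_derivative f' s) (at s)" and "open U" "s \<in> U" "\<And>x. x \<in> U \<Longrightarrow> f x = 0"
  shows "f' s = 0"
proof -
  have ev: "\<forall>\<^sub>F x in nhds s. f x = (\<lambda>_. 0) x"
    using eventually_nhds_in_open[OF assms(2,3)] by (auto elim!: eventually_mono simp: assms(4))
  have "((\<lambda>_. 0) has_real_derivative f' s) (at s)"
    using DERIV_cong_ev[OF refl ev refl] df by simp
  then show ?thesis using DERIV_const DERIV_unique by blast
qed

lemma line_hardy:
  fixes f f' :: "real \<Rightarrow> real" and C S :: "real set" and w :: "real \<Rightarrow> ennreal" and p :: real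
  assumes p: "p > 1"
    and df: "\<And>s. (f has_real_derivative f' s) (at s)"
    and cf': "continuous_on UNIV f'"
    and C: "closed C" and Cint: "\<And>x y z. x \<notin> C \<Longrightarrow> z \<notin> C \<Longrightarrow> x \<le> y \<Longrightarrow> y \<le> z \<Longrightarrow> y \<notin> C"
    and S: "compact S" "S \<inter> C = {}" and fS: "\<And>s. s \<notin> S \<Longrightarrow> f s = 0"
    and wb: "\<And>s t. (\<And>r. s + r \<in> C \<Longrightarrow> t \<le> \<bar>r\<bar>) \<Longrightarrow> 0 < t \<Longrightarrow> w s \<le> ennreal (t powr (-p))"
  shows "ennreal (((p-1)/p) powr p) * (\<integral>\<^sup>+s. w s * ennreal (\<bar>f s\<bar> powr p) \<partial>lborel)
          \<le> (\<integral>\<^sup>+s. ennreal (\<bar>f' s\<bar> powr p) \<partial>lborel)"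
proof (cases "S = {}")
  case True
  then have "(\<integral>\<^sup>+s. w s * ennreal (\<bar>f s\<bar> powr p) \<partial>lborel) = 0"
    using fS by simp
  then show ?thesis by simp
next
  case False
  define ww where "ww s = w s * ennreal (\<bar>f s\<bar> powr p)" for s
  define s1 where "s1 = Inf S"
  define s2 where "s2 = Sup S"
  have s1S: "s1 \<in> S" unfolding s1_def
    using S(1) False by (intro closed_contains_Inf compact_imp_closed bounded_imp_bdd_below compact_imp_bounded) auto
  have s2S: "s2 \<in> S" unfolding s2_def
    using S(1) False by (intro closed_contains_Sup compact_imp_closed bounded_imp_bdd_above compact_imp_bounded) auto
  have Ss: "S \<subseteq> {s1..s2}" unfolding s1_def s2_def
    using S(1) by (auto intro!: cInf_lower cSup_upper bounded_imp_bdd_below bounded_imp_bdd_above compact_imp_bounded)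
  have s12: "s1 \<le> s2" using Ss s1S by auto
  have s1C: "s1 \<notin> C" and s2C: "s2 \<notin> C" using s1S s2S S(2) by auto
  obtain e1 where e1: "e1 > 0" "ball s1 e1 \<subseteq> -C"
    using C s1C open_contains_ball[of "-C"] by (auto simp: open_Compl)
  obtain e2 where e2: "e2 > 0" "ball s2 e2 \<subseteq> -C"
    using C s2C open_contains_ball[of "-C"] by (auto simp: open_Compl)
  define \<alpha> where "\<alpha> = s1 - e1/2"
  define \<beta> where "\<beta> = s2 + e2/2"
  have \<alpha>\<beta>: "\<alpha> < s1" "s2 < \<beta>" "\<alpha> < \<beta>" using e1 e2 s12 by (auto simp: \<alpha>_def \<beta>_def)
  have IC: "y \<notin> C" if y: "y \<in> {\<alpha>..\<beta>}" for y
  proof -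
    consider "y < s1" | "s1 \<le> y \<and> y \<le> s2" | "s2 < y" by linarith
    then show ?thesis
    proof cases
      case 1 then have "y \<in> ball s1 e1" using y e1 by (auto simp: \<alpha>_def dist_real_def)
      then show ?thesis using e1 by auto
    next
      case 2 then show ?thesis using Cint[OF s1C s2C] by auto
    next
      case 3 then have "y \<in> ball s2 e2" using y e2 by (auto simp: \<beta>_def dist_real_def)
      then show ?thesis using e2 by auto
    qed
  qed
  have f_out: "f s = 0" if "s < s1 \<or> s2 < s" for s using fS Ss that by force
  have f'_out: "f' s = 0" if s: "s \<notin> {\<alpha>..\<beta>}" for s
  proof (cases "s < s1")
    case True
    show ?thesis by (rule deriv_zero_outside[OF df, where U="{..<s1}"]) (use True f_out in auto)
  next
    case False
    then have "s2 < s" using s \<alpha>\<beta> by auto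
    show ?thesis by (rule deriv_zero_outside[OF df, where U="{s2<..}"]) (use \<open>s2 < s\<close> f_out in auto)
  qed
  define A where "A = {r\<in>C. r < \<alpha>}"
  define B where "B = {r\<in>C. \<beta> < r}"
  have A_eq: "A = C \<inter> {..\<alpha>}" using IC[of \<alpha>] \<alpha>\<beta> by (force simp: A_def order_le_less)
  have B_eq: "B = C \<inter> {\<beta>..}" using IC[of \<beta>] \<alpha>\<beta> by (force simp: B_def order_le_less)
  define a where "a = (if A = {} then \<alpha> - 1 else Sup A)"
  define b where "b = (if B = {} then \<beta> + 1 else Inf B)"
  have a: "a < \<alpha>"
  proof (cases "A = {}")
    case False
    have "Sup A \<in> A" unfolding A_eq using False C unfolding A_eq
      by (intro closed_contains_Sup) (auto intro: closed_Int bdd_aboveI[where M=\<alpha>])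
    then show ?thesis using False by (simp add: a_def A_def)
  qed (simp add: a_def)
  have b: "\<beta> < b"
  proof (cases "B = {}")
    case False
    have "Inf B \<in> B" unfolding B_eq using False C unfolding B_eq
      by (intro closed_contains_Inf) (auto intro: closed_Int bdd_belowI[where m=\<beta>])
    then show ?thesis using False by (simp add: b_def B_def)
  qed (simp add: b_def)
  have Aa: "r \<le> a" if "r \<in> C" "r < \<alpha>" for r
  proof -
    have "A \<noteq> {}" using that by (auto simp: A_def)
    then show ?thesis using that by (auto simp: a_def A_def intro!: cSup_upper bdd_aboveI[where M=\<alpha>])
  qed
  have Bb: "b \<le> r" if "r \<in> C" "\<beta> < r" for r
  proof -
    have "B \<noteq> {}" using that by (auto simp: B_def)
    then show ?thesis using that by (auto simp: b_def B_def intro!: cInf_lower bdd_belowI[where m=\<beta>])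
  qed
  define m where "m = (if A = {} then \<alpha> else if B = {} then \<beta> else max \<alpha> (min \<beta> ((a+b)/2)))"
  have am: "\<alpha> \<le> m" and mb: "m \<le> \<beta>" using \<alpha>\<beta> by (auto simp: m_def)
  have CAB: "r \<in> C \<Longrightarrow> (r < \<alpha> \<and> r \<le> a) \<or> (\<beta> < r \<and> b \<le> r)" for r
    using IC[of r] Aa Bb by force
  have disj: "(s \<le> m \<and> (\<forall>r. s + r \<in> C \<longrightarrow> s - a \<le> \<bar>r\<bar>)) \<or> (m \<le> s \<and> (\<forall>r. s + r \<in> C \<longrightarrow> b - s \<le> \<bar>r\<bar>))"
    if s: "s \<in> {\<alpha>..\<beta>}" for s
  proof (cases "A = {}")
    case True
    then have "\<forall>r. s + r \<in> C \<longrightarrow> b - s \<le> \<bar>r\<bar>"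
      using CAB s by (force simp: A_def)
    then show ?thesis using True s by (simp add: m_def)
  next
    case Ane: False
    show ?thesis
    proof (cases "B = {}")
      case True
      then have "\<forall>r. s + r \<in> C \<longrightarrow> s - a \<le> \<bar>r\<bar>"
        using CAB s by (force simp: B_def)
      then show ?thesis using True Ane s by (simp add: m_def)
    next
      case Bne: False
      show ?thesis
      proof (cases "s \<le> (a+b)/2")
        case True
        have "\<forall>r. s + r \<in> C \<longrightarrow> s - a \<le> \<bar>r\<bar>"
          using CAB s True by force
        moreover have "s \<le> m" using True s Ane Bne by (auto simp: m_def)
        ultimately show ?thesis by simp
      next
        case False
        have "\<forall>r. s + r \<in> C \<longrightarrow> b - s \<le> \<bar>r\<bar>"
          using CAB s False by force
        moreover have "m \<le> s" using False s Ane Bne by (auto simp: m_def)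
        ultimately show ?thesis by simp
      qed
    qed
  qed
  have wwb: "ww s \<le> ennreal (indicator {\<alpha>..m} s * (\<bar>f s\<bar> powr p / (s - a) powr p)
               + indicator {m..\<beta>} s * (\<bar>f s\<bar> powr p / (b - s) powr p))" if s: "s \<in> {\<alpha>..\<beta>}" for s
  proof -
    have key: "ww s \<le> ennreal (\<bar>f s\<bar> powr p / t powr p)"
      if t: "0 < t" "\<And>r. s + r \<in> C \<Longrightarrow> t \<le> \<bar>r\<bar>" for t
    proof -
      have "ww s \<le> ennreal (t powr (-p)) * ennreal (\<bar>f s\<bar> powr p)"
        unfolding ww_def by (rule mult_right_mono[OF wb[OF t(2) t(1)] zero_le])
      also have "\<dots> = ennreal (\<bar>f s\<bar> powr p / t powr p)"
        by (simp add: ennreal_mult[symmetric] powr_minus_divide)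
      finally show ?thesis .
    qed
    from disj[OF s] show ?thesis
    proof
      assume h: "s \<le> m \<and> (\<forall>r. s + r \<in> C \<longrightarrow> s - a \<le> \<bar>r\<bar>)"
      have "ww s \<le> ennreal (\<bar>f s\<bar> powr p / (s - a) powr p)"
        using h s a by (intro key) auto
      also have "\<dots> \<le> ennreal (indicator {\<alpha>..m} s * (\<bar>f s\<bar> powr p / (s - a) powr p)
               + indicator {m..\<beta>} s * (\<bar>f s\<bar> powr p / (b - s) powr p))"
        using h s by (intro ennreal_leI) (auto simp: indicator_def)
      finally show ?thesis .
    next
      assume h: "m \<le> s \<and> (\<forall>r. s + r \<in> C \<longrightarrow> b - s \<le> \<bar>r\<bar>)"
      have "ww s \<le> ennreal (\<bar>f s\<bar> powr p / (b - s) powr p)"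
        using h s b by (intro key) auto
      also have "\<dots> \<le> ennreal (indicator {\<alpha>..m} s * (\<bar>f s\<bar> powr p / (s - a) powr p)
               + indicator {m..\<beta>} s * (\<bar>f s\<bar> powr p / (b - s) powr p))"
        using h s by (intro ennreal_leI) (auto simp: indicator_def)
      finally show ?thesis .
    qed
  qed
  have HI: "ennreal (((p-1)/p) powr p) * (\<integral>\<^sup>+s. indicator {\<alpha>..\<beta>} s * ww s \<partial>lborel)
          \<le> (\<integral>\<^sup>+s. indicator {\<alpha>..\<beta>} s * ennreal (\<bar>f' s\<bar> powr p) \<partial>lborel)"
    by (rule hardy_interval[OF p a am mb b df cf' _ _ wwb]) (use f_out \<alpha>\<beta> in auto)
  have e1: "(\<integral>\<^sup>+s. w s * ennreal (\<bar>f s\<bar> powr p) \<partial>lborel) = (\<integral>\<^sup>+s. indicator {\<alpha>..\<beta>} s * ww s \<partial>lborel)"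
    by (rule nn_integral_cong) (use f_out \<alpha>\<beta> p in \<open>auto simp: ww_def indicator_def\<close>)
  have e2: "(\<integral>\<^sup>+s. ennreal (\<bar>f' s\<bar> powr p) \<partial>lborel) = (\<integral>\<^sup>+s. indicator {\<alpha>..\<beta>} s * ennreal (\<bar>f' s\<bar> powr p) \<partial>lborel)"
    by (rule nn_integral_cong) (use f'_out in \<open>auto simp: indicator_def\<close>)
  show ?thesis unfolding e1 e2 by (rule HI)
qed

lemma cc_diff:
  assumes "u \<in> Cc_infty \<Omega>"
  shows "u differentiable (at x)"
  using assms unfolding Cc_infty_def smooth_fun_def by blast

lemma cc_deriv_cont:
  assumes "u \<in> Cc_infty \<Omega>"
  shows "continuous_on UNIV (\<lambda>x. frechet_derivative u (at x) v)"
proof -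
  obtain F where F: "u \<in> F" "\<forall>g\<in>F. (\<forall>x. g differentiable (at x)) \<and>
        (\<forall>v. (\<lambda>x. frechet_derivative g (at x) v) \<in> F)"
    using assms unfolding Cc_infty_def smooth_fun_def by blast
  then have "\<forall>x. (\<lambda>x. frechet_derivative u (at x) v) differentiable (at x)" by blast
  then show ?thesis
    by (intro continuous_at_imp_continuous_on ballI differentiable_imp_continuous_within) auto
qed

lemma cc_cont:
  assumes "u \<in> Cc_infty \<Omega>"
  shows "continuous_on UNIV u"
  using cc_diff[OF assms]
  by (intro continuous_at_imp_continuous_on ballI differentiable_imp_continuous_within) auto

lemma cc_supp:
  assumes "u \<in> Cc_infty \<Omega>"
  shows "compact (closure {x. u x \<noteq> 0})" "closure {x. u x \<noteq> 0} \<subseteq> \<Omega>"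
  using assms unfolding Cc_infty_def by auto

lemma cc_deriv_zero:
  assumes "u \<in> Cc_infty \<Omega>" "x \<notin> closure {x. u x \<noteq> 0}"
  shows "frechet_derivative u (at x) v = 0"
proof -
  have d: "(u has_derivative frechet_derivative u (at x)) (at x)"
    using cc_diff[OF assms(1)] frechet_derivative_works by blast
  have "((\<lambda>_. 0) has_derivative frechet_derivative u (at x)) (at x)"
    by (rule has_derivative_transform_within_open[OF d, of "- closure {x. u x \<noteq> 0}"])
       (use assms(2) closure_subset[of "{x. u x \<noteq> 0}"] in auto)
  then have "frechet_derivative u (at x) = (\<lambda>_. 0)"
    using has_derivative_unique has_derivative_const by blast
  then show ?thesis by simp
qed

lemma cc_line_deriv:
  fixes u :: "'a::euclidean_space \<Rightarrow> real"
  assumes "u \<in> Cc_infty \<Omega>"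
  shows "((\<lambda>s. u (x + s *\<^sub>R V)) has_real_derivative frechet_derivative u (at (x + s *\<^sub>R V)) V) (at s)"
proof -
  have du: "(u has_derivative frechet_derivative u (at (x + s *\<^sub>R V))) (at (x + s *\<^sub>R V))"
    using cc_diff[OF assms] frechet_derivative_works by blast
  have lin: "linear (frechet_derivative u (at (x + s *\<^sub>R V)))"
    using cc_diff[OF assms] linear_frechet_derivative by blast
  have dl: "((\<lambda>s. x + s *\<^sub>R V) has_derivative (\<lambda>h. h *\<^sub>R V)) (at s)"
    by (auto intro!: derivative_eq_intros)
  have "((\<lambda>s. u (x + s *\<^sub>R V)) has_derivative (\<lambda>h. frechet_derivative u (at (x + s *\<^sub>R V)) (h *\<^sub>R V))) (at s)"
    by (rule has_derivative_compose[OF dl du])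
  moreover have "(\<lambda>h. frechet_derivative u (at (x + s *\<^sub>R V)) (h *\<^sub>R V)) = (*) (frechet_derivative u (at (x + s *\<^sub>R V)) V)"
    using linear_scale[OF lin] by (auto simp: fun_eq_iff)
  ultimately show ?thesis by (simp add: has_field_derivative_def)
qed

lemma ball_infdist_frontier:
  fixes \<Omega> :: "'a::euclidean_space set"
  assumes "\<xi> \<in> \<Omega>" "y \<in> ball \<xi> (infdist \<xi> (frontier \<Omega>))"
  shows "y \<in> \<Omega>"
proof (rule ccontr)
  assume "y \<notin> \<Omega>"
  have "closed_segment \<xi> y \<inter> frontier \<Omega> \<noteq> {}"
    by (rule connected_Int_frontier) (use assms \<open>y \<notin> \<Omega>\<close> in auto)
  then obtain z where z: "z \<in> closed_segment \<xi> y" "z \<in> frontier \<Omega>" by auto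
  have "infdist \<xi> (frontier \<Omega>) \<le> dist \<xi> z" by (rule infdist_le[OF z(2)])
  also have "\<dots> \<le> dist \<xi> y" using dist_in_closed_segment[OF z(1)] by (simp add: dist_commute)
  finally show False using assms(2) by simp
qed

lemma halfspace:
  fixes \<Omega> :: "'a::euclidean_space set"
  assumes op: "open \<Omega>" and cv: "convex \<Omega>" and \<xi>: "\<xi> \<in> \<Omega>"
    and ph: "ph \<in> frontier \<Omega>" and d: "dist \<xi> ph = infdist \<xi> (frontier \<Omega>)"
    and \<eta>: "\<eta> \<in> \<Omega>"
  shows "(\<eta> - \<xi>) \<bullet> (ph - \<xi>) < (dist \<xi> ph)\<^sup>2"
proof (rule ccontr)
  define D where "D = dist \<xi> ph"
  define \<nu> where "\<nu> = ph - \<xi>"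
  have phO: "ph \<notin> \<Omega>" using ph op by (simp add: frontier_def interior_open)
  have D0: "D > 0" using phO \<xi> by (auto simp: D_def)
  have nn: "\<nu> \<bullet> \<nu> = D\<^sup>2" by (simp add: \<nu>_def D_def dist_norm power2_norm_eq_inner[symmetric] norm_minus_commute)
  assume "\<not> (\<eta> - \<xi>) \<bullet> (ph - \<xi>) < (dist \<xi> ph)\<^sup>2"
  then have ge: "(\<eta> - \<xi>) \<bullet> \<nu> \<ge> D\<^sup>2" by (simp add: \<nu>_def D_def)
  obtain \<epsilon> where \<epsilon>: "\<epsilon> > 0" "ball \<eta> \<epsilon> \<subseteq> \<Omega>" using op \<eta> open_contains_ball by blast
  define \<eta>' where "\<eta>' = \<eta> + (\<epsilon> / (2 * D)) *\<^sub>R \<nu>"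
  have "norm ((\<epsilon> / (2 * D)) *\<^sub>R \<nu>) = \<epsilon>/2"
    using D0 \<epsilon> by (simp add: \<nu>_def D_def dist_norm norm_minus_commute)
  then have \<eta>'O: "\<eta>' \<in> \<Omega>" using \<epsilon> by (intro subsetD[OF \<epsilon>(2)]) (auto simp: \<eta>'_def dist_norm)
  define \<delta> where "\<delta> = (\<eta>' - ph) \<bullet> \<nu>"
  have weq: "\<eta>' - ph = (\<eta> - \<xi>) + (\<epsilon> / (2 * D)) *\<^sub>R \<nu> - \<nu>"
    by (simp add: \<eta>'_def \<nu>_def algebra_simps)
  have "(\<eta>' - ph) \<bullet> \<nu> = (\<eta> - \<xi>) \<bullet> \<nu> + (\<epsilon> / (2 * D)) * D\<^sup>2 - D\<^sup>2"
    unfolding weq by (simp add: inner_diff_left inner_add_left nn)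
  moreover have "\<epsilon> * D\<^sup>2 / (2 * D) > 0" using D0 \<epsilon> by simp
  ultimately have \<delta>0: "\<delta> > 0" using ge by (simp add: \<delta>_def)
  define N where "N = (\<eta>' - ph) \<bullet> (\<eta>' - ph)"
  have N0: "N > 0" using \<eta>'O phO by (auto simp: N_def)
  define t where "t = \<delta> / N"
  have t0: "t > 0" using \<delta>0 N0 by (simp add: t_def)
  define z where "z = ph - t *\<^sub>R (\<eta>' - ph)"
  define w where "w = \<eta>' - ph"
  have zeq: "z - \<xi> = \<nu> - t *\<^sub>R w" by (simp add: z_def w_def \<nu>_def algebra_simps)
  have "(z - \<xi>) \<bullet> (z - \<xi>) = D\<^sup>2 - 2 * t * \<delta> + t\<^sup>2 * N"
    unfolding zeq \<delta>_def N_def w_def[symmetric]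
    by (simp add: nn inner_diff_left inner_diff_right inner_commute[of \<nu> w] algebra_simps power2_eq_square)
  also have "\<dots> = D\<^sup>2 - \<delta>\<^sup>2 / N"
    using N0 by (simp add: t_def field_simps power2_eq_square)
  also have "\<dots> < D\<^sup>2" using D0 \<delta>0 N0 by simp
  finally have "norm (z - \<xi>) < D"
    using D0 by (simp add: power2_norm_eq_inner[symmetric] power_less_imp_less_base)
  then have zO: "z \<in> \<Omega>"
    using ball_infdist_frontier[OF \<xi>, of z] d by (simp add: D_def dist_norm norm_minus_commute)
  have "ph = (1 / (1 + t)) *\<^sub>R z + (t / (1 + t)) *\<^sub>R \<eta>'"
  proof -
    have e: "(1 + t) *\<^sub>R ph = z + t *\<^sub>R \<eta>'" by (simp add: z_def algebra_simps)
    have "ph = (1/(1+t)) *\<^sub>R ((1 + t) *\<^sub>R ph)" using t0 by simp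
    also have "\<dots> = (1/(1+t)) *\<^sub>R (z + t *\<^sub>R \<eta>')" by (simp only: e)
    finally show ?thesis by (simp add: scaleR_add_right)
  qed
  also have "\<dots> \<in> \<Omega>"
    using t0 zO \<eta>'O cv by (intro convexD) (auto simp: field_simps)
  finally show False using phO by simp
qed

definition Wf :: "'a::euclidean_space set \<Rightarrow> ('a \<Rightarrow> 'a) \<Rightarrow> real \<Rightarrow> 'a \<Rightarrow> ennreal" where
  "Wf \<Omega> F p \<xi> = (SUP r\<in>\<rat>. indicator (-\<Omega>) (\<xi> + r *\<^sub>R F \<xi>) * ennreal (\<bar>r\<bar> powr (-p)))"

lemma Wf_meas:
  assumes "open \<Omega>" and [measurable]: "F \<in> borel_measurable borel"
  shows "Wf \<Omega> F p \<in> borel_measurable borel"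
proof -
  have [measurable]: "-\<Omega> \<in> sets borel" using assms(1) by auto
  show ?thesis unfolding Wf_def
    by (rule borel_measurable_SUP[OF countable_rat]) measurable
qed

lemma Wf_upper:
  assumes "\<And>r. \<xi> + r *\<^sub>R F \<xi> \<notin> \<Omega> \<Longrightarrow> t \<le> \<bar>r\<bar>" "0 < t" "0 \<le> p"
  shows "Wf \<Omega> F p \<xi> \<le> ennreal (t powr (-p))"
  unfolding Wf_def
proof (rule SUP_least)
  fix r :: real assume "r \<in> \<rat>"
  show "indicator (-\<Omega>) (\<xi> + r *\<^sub>R F \<xi>) * ennreal (\<bar>r\<bar> powr (-p)) \<le> ennreal (t powr (-p))"
  proof (cases "\<xi> + r *\<^sub>R F \<xi> \<in> \<Omega>")
    case False
    then have "t \<le> \<bar>r\<bar>" using assms(1) by blast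
    then have "\<bar>r\<bar> powr (-p) \<le> t powr (-p)" using assms by (intro powr_mono2') auto
    then show ?thesis using False by (simp add: ennreal_leI)
  qed simp
qed

lemma Wf_lower:
  assumes out: "\<And>r. D \<le> r * (F \<xi> \<bullet> \<nu>) \<Longrightarrow> \<xi> + r *\<^sub>R F \<xi> \<notin> \<Omega>" and D: "0 < D" and p: "0 < p"
  shows "ennreal (\<bar>F \<xi> \<bullet> \<nu>\<bar> powr p / D powr p) \<le> Wf \<Omega> F p \<xi>"
proof (cases "F \<xi> \<bullet> \<nu> = 0")
  case True then show ?thesis by simp
next
  case False
  define a0 where "a0 = F \<xi> \<bullet> \<nu>"
  define a where "a = \<bar>a0\<bar>"
  have a: "a > 0" using False by (simp add: a_def a0_def)
  show ?thesis
  proof (rule ccontr)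
    assume "\<not> ?thesis"
    then have lt: "Wf \<Omega> F p \<xi> < ennreal (a powr p / D powr p)" by (simp add: a_def a0_def)
    then have "Wf \<Omega> F p \<xi> \<noteq> top" by auto
    define w where "w = enn2real (Wf \<Omega> F p \<xi>)"
    have Ww: "Wf \<Omega> F p \<xi> = ennreal w" using \<open>Wf \<Omega> F p \<xi> \<noteq> top\<close> by (simp add: w_def ennreal_enn2real_if)
    have w0: "0 \<le> w" by (simp add: w_def)
    have wl: "w < a powr p / D powr p" using lt Ww a D w0 by (simp add: ennreal_less_iff)
    obtain r where r: "r \<in> \<rat>" "D / a < r" "w < r powr (-p)"
    proof (cases "w = 0")
      case True
      obtain r where "r \<in> \<rat>" "D / a < r" "r < D / a + 1" using Rats_dense_in_real[of "D/a" "D/a + 1"] by auto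
      moreover have "r powr (-p) > 0"
      proof -
        have "0 < D / a" using D a by simp
        then have "0 < r" using \<open>D / a < r\<close> by linarith
        then show ?thesis by simp
      qed
      ultimately show ?thesis using that True by auto
    next
      case False
      then have wpos: "w > 0" using w0 by simp
      define \<rho> where "\<rho> = w powr (-1/p)"
      have "(a powr p / D powr p) powr (-1/p) < w powr (-1/p)"
        using wl wpos p by (intro powr_less_mono2_neg) auto
      moreover have "(a powr p / D powr p) powr (-1/p) = D / a"
        using a D p by (simp add: powr_divide[symmetric] powr_powr powr_minus_divide powr_neg_one)
      ultimately have \<rho>: "D / a < \<rho>" by (simp add: \<rho>_def)
      obtain r where r: "r \<in> \<rat>" "D / a < r" "r < \<rho>" using Rats_dense_in_real[OF \<rho>] by auto
      have r0: "0 < r" using r D a by (smt (verit) divide_pos_pos)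
      have "\<rho> powr (-p) < r powr (-p)" using r r0 p by (intro powr_less_mono2_neg) auto
      moreover have "\<rho> powr (-p) = w" using wpos p by (simp add: \<rho>_def powr_powr)
      ultimately show ?thesis using that r by auto
    qed
    have r0: "0 < r" using r D a by (smt (verit) divide_pos_pos)
    define r' where "r' = sgn a0 * r"
    have r'Q: "r' \<in> \<rat>" using r(1) by (auto simp: r'_def sgn_if)
    have "r' * (F \<xi> \<bullet> \<nu>) = r * a" by (simp add: r'_def a_def a0_def abs_sgn mult.commute)
    moreover have "D \<le> r * a" using r(2) a by (simp add: divide_less_eq less_imp_le mult.commute)
    ultimately have "\<xi> + r' *\<^sub>R F \<xi> \<notin> \<Omega>" using out by simp
    then have "ennreal (r powr (-p)) \<le> Wf \<Omega> F p \<xi>"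
      unfolding Wf_def using r'Q False r0
      by (intro SUP_upper2[of r']) (auto simp: r'_def abs_mult a0_def)
    moreover have "ennreal w < ennreal (r powr (-p))" using r(3) w0 by (simp add: ennreal_less_iff)
    ultimately show False using Ww by simp
  qed
qed

lemma per_dir:
  fixes \<Omega> :: "'a::euclidean_space set" and u :: "'a \<Rightarrow> real" and F :: "'a \<Rightarrow> 'a" and b c e :: 'a
  assumes op: "open \<Omega>" and cv: "convex \<Omega>" and u: "u \<in> Cc_infty \<Omega>" and p: "p > 1"
    and bb: "b \<bullet> b = 1" and cc: "c \<bullet> c = 1" and bc: "b \<bullet> c = 0" and be: "b \<bullet> e = 0" and ce: "c \<bullet> e = 0"
    and F: "F = (\<lambda>\<xi>. b + (\<alpha> * (\<xi> \<bullet> e)) *\<^sub>R c)"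
  shows "ennreal (((p-1)/p) powr p) * (\<integral>\<^sup>+\<xi>. Wf \<Omega> F p \<xi> * ennreal (\<bar>u \<xi>\<bar> powr p) \<partial>lborel)
      \<le> (\<integral>\<^sup>+\<xi>. ennreal (\<bar>frechet_derivative u (at \<xi>) (F \<xi>)\<bar> powr p) \<partial>lborel)"
proof -
  define c0 where "c0 = ennreal (((p-1)/p) powr p)"
  define K where "K = closure {x. u x \<noteq> 0}"
  have K: "compact K" "K \<subseteq> \<Omega>" using cc_supp[OF u] by (auto simp: K_def)
  define DU where "DU v x = frechet_derivative u (at x) v" for v x
  have cDU: "continuous_on UNIV (DU v)" for v unfolding DU_def by (rule cc_deriv_cont[OF u])
  have mDU[measurable]: "DU v \<in> borel_measurable borel" for v by (rule borel_measurable_continuous_onI[OF cDU])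
  have mu[measurable]: "u \<in> borel_measurable borel" by (rule borel_measurable_continuous_onI[OF cc_cont[OF u]])
  have mF[measurable]: "F \<in> borel_measurable borel" unfolding F by measurable
  have mW[measurable]: "Wf \<Omega> F p \<in> borel_measurable borel" by (rule Wf_meas[OF op mF])
  have Deq: "frechet_derivative u (at \<xi>) (F \<xi>) = DU b \<xi> + (\<alpha> * (\<xi> \<bullet> e)) * DU c \<xi>" for \<xi>
  proof -
    have lin: "linear (frechet_derivative u (at \<xi>))"
      using cc_diff[OF u] linear_frechet_derivative by blast
    show ?thesis unfolding F DU_def using linear_add[OF lin] linear_scale[OF lin] by simp
  qed
  have mD[measurable]: "(\<lambda>\<xi>. frechet_derivative u (at \<xi>) (F \<xi>)) \<in> borel_measurable borel"
    unfolding Deq by measurable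
  define h1 where "h1 \<xi> = ennreal (\<bar>frechet_derivative u (at \<xi>) (F \<xi>)\<bar> powr p)" for \<xi>
  define h2 where "h2 \<xi> = c0 * (Wf \<Omega> F p \<xi> * ennreal (\<bar>u \<xi>\<bar> powr p))" for \<xi>
  have mh1[measurable]: "h1 \<in> borel_measurable borel" unfolding h1_def by measurable
  have mh2[measurable]: "h2 \<in> borel_measurable borel" unfolding h2_def by measurable
  have Fline: "F (x + s *\<^sub>R F x) = F x" for x s
    unfolding F by (simp add: inner_add_left ce inner_commute[of e b] be)
  have Fb: "F x \<bullet> b = 1" for x unfolding F by (simp add: inner_add_left bb inner_commute[of c b] bc)
  have inner: "(\<integral>\<^sup>+s. h2 (x + s *\<^sub>R F x) \<partial>lborel) \<le> (\<integral>\<^sup>+s. h1 (x + s *\<^sub>R F x) \<partial>lborel)" for x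
  proof -
    define V where "V = F x"
    define f where "f s = u (x + s *\<^sub>R V)" for s
    define f' where "f' s = DU V (x + s *\<^sub>R V)" for s
    define C where "C = {s. x + s *\<^sub>R V \<notin> \<Omega>}"
    define S where "S = {s. x + s *\<^sub>R V \<in> K}"
    have cl: "continuous (at s) (\<lambda>s. x + s *\<^sub>R V)" for s by (intro continuous_intros)
    have df: "(f has_real_derivative f' s) (at s)" for s
      unfolding f_def f'_def DU_def by (rule cc_line_deriv[OF u])
    have cf': "continuous_on UNIV f'"
      unfolding f'_def
      by (rule continuous_on_compose2[OF cDU[of V]]) (auto intro!: continuous_intros)
    have Ceq: "C = (\<lambda>s. x + s *\<^sub>R V) -` (-\<Omega>)" by (auto simp: C_def)
    have clC: "closed C" unfolding Ceq using op by (intro continuous_closed_vimage cl) auto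
    have Cint: "y \<notin> C" if "x1 \<notin> C" "z \<notin> C" "x1 \<le> y" "y \<le> z" for x1 y z
    proof (cases "x1 = z")
      case True then show ?thesis using that by auto
    next
      case False
      then have xz: "x1 < z" using that by auto
      define \<theta> where "\<theta> = (y - x1) / (z - x1)"
      have \<theta>: "0 \<le> \<theta>" "\<theta> \<le> 1" using that xz by (auto simp: \<theta>_def divide_simps)
      have "x + y *\<^sub>R V = (1 - \<theta>) *\<^sub>R (x + x1 *\<^sub>R V) + \<theta> *\<^sub>R (x + z *\<^sub>R V)"
      proof -
        have h: "\<theta> * (z - x1) = y - x1" using xz by (simp add: \<theta>_def)
        have "(1 - \<theta>) * x1 + \<theta> * z = x1 + \<theta> * (z - x1)" by (simp add: algebra_simps)
        then have "y = (1 - \<theta>) * x1 + \<theta> * z" using h by simp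
        moreover have "(1 - \<theta>) *\<^sub>R (x + x1 *\<^sub>R V) + \<theta> *\<^sub>R (x + z *\<^sub>R V) = x + ((1 - \<theta>) * x1 + \<theta> * z) *\<^sub>R V"
          by (simp add: algebra_simps)
        ultimately show ?thesis by simp
      qed
      also have "\<dots> \<in> \<Omega>" using that \<theta> by (intro convexD_alt[OF cv]) (auto simp: C_def)
      finally show ?thesis by (simp add: C_def)
    qed
    have Seq: "S = (\<lambda>s. x + s *\<^sub>R V) -` K" by (auto simp: S_def)
    have clS: "closed S" unfolding Seq using K by (intro continuous_closed_vimage cl compact_imp_closed) auto
    obtain B where B: "\<forall>y\<in>K. norm y \<le> B"
      using compact_imp_bounded[OF K(1)] unfolding Elementary_Metric_Spaces.bounded_iff by blast
    have nb: "norm b = 1" using bb by (simp add: norm_eq_sqrt_inner)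
    have "bounded S" unfolding Elementary_Metric_Spaces.bounded_iff
    proof (intro exI ballI)
      fix s assume "s \<in> S"
      then have "norm (x + s *\<^sub>R V) \<le> B" using B by (auto simp: S_def)
      have "norm s = \<bar>(x + s *\<^sub>R V) \<bullet> b - x \<bullet> b\<bar>"
        by (simp add: inner_add_left V_def Fb)
      also have "\<dots> \<le> \<bar>(x + s *\<^sub>R V) \<bullet> b\<bar> + \<bar>x \<bullet> b\<bar>" by linarith
      also have "\<dots> \<le> norm (x + s *\<^sub>R V) + norm x"
        using Cauchy_Schwarz_ineq2[of "x + s *\<^sub>R V" b] Cauchy_Schwarz_ineq2[of x b] nb by simp
      also have "\<dots> \<le> B + norm x" using \<open>norm (x + s *\<^sub>R V) \<le> B\<close> by simp
      finally show "norm s \<le> B + norm x" .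
    qed
    then have cS: "compact S" using clS compact_eq_bounded_closed by blast
    have SC: "S \<inter> C = {}" using K by (auto simp: S_def C_def)
    have fS: "f s = 0" if "s \<notin> S" for s
      using that closure_subset[of "{x. u x \<noteq> 0}"] by (auto simp: S_def f_def K_def)
    have wb: "Wf \<Omega> F p (x + s *\<^sub>R V) \<le> ennreal (t powr (-p))"
      if t: "\<And>r. s + r \<in> C \<Longrightarrow> t \<le> \<bar>r\<bar>" "0 < t" for s t
    proof (rule Wf_upper)
      fix r assume "x + s *\<^sub>R V + r *\<^sub>R F (x + s *\<^sub>R V) \<notin> \<Omega>"
      then have "s + r \<in> C" using Fline[of x s] by (simp add: C_def V_def algebra_simps scaleR_add_left)
      then show "t \<le> \<bar>r\<bar>" by (rule t(1))
    qed (use t p in auto)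
    have LH: "ennreal (((p-1)/p) powr p) * (\<integral>\<^sup>+s. Wf \<Omega> F p (x + s *\<^sub>R V) * ennreal (\<bar>f s\<bar> powr p) \<partial>lborel)
          \<le> (\<integral>\<^sup>+s. ennreal (\<bar>f' s\<bar> powr p) \<partial>lborel)"
      by (rule line_hardy[OF p df cf' clC Cint cS SC fS wb])
    have "(\<integral>\<^sup>+s. h2 (x + s *\<^sub>R F x) \<partial>lborel)
        = c0 * (\<integral>\<^sup>+s. Wf \<Omega> F p (x + s *\<^sub>R V) * ennreal (\<bar>f s\<bar> powr p) \<partial>lborel)"
      unfolding h2_def f_def V_def by (rule nn_integral_cmult) measurable
    also have "\<dots> \<le> (\<integral>\<^sup>+s. ennreal (\<bar>f' s\<bar> powr p) \<partial>lborel)" using LH by (simp add: c0_def)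
    also have "\<dots> = (\<integral>\<^sup>+s. h1 (x + s *\<^sub>R F x) \<partial>lborel)"
      unfolding h1_def f'_def V_def DU_def using Fline by simp
    finally show ?thesis .
  qed
  have "c0 * (\<integral>\<^sup>+\<xi>. Wf \<Omega> F p \<xi> * ennreal (\<bar>u \<xi>\<bar> powr p) \<partial>lborel) = (\<integral>\<^sup>+\<xi>. h2 \<xi> \<partial>lborel)"
    unfolding h2_def by (rule nn_integral_cmult[symmetric]) measurable
  also have "\<dots> = (\<integral>\<^sup>+x. indicator (slab b) x * (\<integral>\<^sup>+s. h2 (x + s *\<^sub>R F x) \<partial>lborel) \<partial>lborel)"
    unfolding F by (rule line_decomp[OF mh2 bb cc bc be ce])
  also have "\<dots> \<le> (\<integral>\<^sup>+x. indicator (slab b) x * (\<integral>\<^sup>+s. h1 (x + s *\<^sub>R F x) \<partial>lborel) \<partial>lborel)"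
    by (intro nn_integral_mono mult_left_mono inner) auto
  also have "\<dots> = (\<integral>\<^sup>+\<xi>. h1 \<xi> \<partial>lborel)"
    unfolding F by (rule line_decomp[OF mh1 bb cc bc be ce, symmetric])
  finally show ?thesis unfolding c0_def h1_def .
qed

lemma powr_superadd:
  fixes x y q :: real
  assumes q: "q \<ge> 1" and x: "x \<ge> 0" and y: "y \<ge> 0"
  shows "x powr q + y powr q \<le> (x + y) powr q"
proof (cases "x + y = 0")
  case True then have "x = 0" "y = 0" using x y by auto
  then show ?thesis using q by simp
next
  case False
  then have xy: "x + y > 0" using x y by simp
  have "x powr q = x * x powr (q - 1)" using powr_add[of x 1 "q-1"] x by (cases "x = 0") auto
  also have "\<dots> \<le> x * (x + y) powr (q - 1)" using x y q by (intro mult_left_mono powr_mono2) auto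
  finally have 1: "x powr q \<le> x * (x + y) powr (q - 1)" .
  have "y powr q = y * y powr (q - 1)" using powr_add[of y 1 "q-1"] y by (cases "y = 0") auto
  also have "\<dots> \<le> y * (x + y) powr (q - 1)" using x y q by (intro mult_left_mono powr_mono2) auto
  finally have 2: "y powr q \<le> y * (x + y) powr (q - 1)" .
  have "(x + y) powr q = (x + y) * (x + y) powr (q - 1)" using powr_add[of "x+y" 1 "q-1"] xy by simp
  then show ?thesis using 1 2 by (simp add: distrib_right)
qed

lemma powr_superadd_sum:
  fixes f :: "'i \<Rightarrow> real"
  assumes "finite I" "\<And>i. i \<in> I \<Longrightarrow> 0 \<le> f i" "q \<ge> 1"
  shows "(\<Sum>i\<in>I. f i powr q) \<le> (\<Sum>i\<in>I. f i) powr q"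
  using assms
proof (induction I rule: finite_induct)
  case empty then show ?case by simp
next
  case (insert a I)
  have "(\<Sum>i\<in>insert a I. f i powr q) = f a powr q + (\<Sum>i\<in>I. f i powr q)" using insert by simp
  also have "\<dots> \<le> f a powr q + (\<Sum>i\<in>I. f i) powr q" using insert by simp
  also have "\<dots> \<le> (f a + (\<Sum>i\<in>I. f i)) powr q"
    using insert by (intro powr_superadd) (auto intro: sum_nonneg)
  finally show ?case using insert by simp
qed

lemma sq_powr_half:
  fixes a p :: real assumes "p > 0"
  shows "(a\<^sup>2) powr (p/2) = \<bar>a\<bar> powr p"
proof (cases "a = 0")
  case True then show ?thesis using assms by simp
next
  case False
  have e: "a\<^sup>2 = \<bar>a\<bar> powr 2" using False by (subst powr_numeral) auto
  show ?thesis unfolding e by (subst powr_powr) simp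
qed

lemma grad_bound:
  fixes A B :: "'i::finite \<Rightarrow> real" and p :: real
  assumes p: "p \<ge> 2"
  shows "(\<Sum>i\<in>UNIV. \<bar>A i\<bar> powr p + \<bar>B i\<bar> powr p) \<le> sqrt (\<Sum>i\<in>UNIV. (A i)\<^sup>2 + (B i)\<^sup>2) powr p"
proof -
  have q: "p / 2 \<ge> 1" using p by simp
  have "(\<Sum>i\<in>UNIV. \<bar>A i\<bar> powr p + \<bar>B i\<bar> powr p) = (\<Sum>i\<in>UNIV. (A i)\<^sup>2 powr (p/2) + (B i)\<^sup>2 powr (p/2))"
    using p by (simp add: sq_powr_half)
  also have "\<dots> \<le> (\<Sum>i\<in>UNIV. ((A i)\<^sup>2 + (B i)\<^sup>2) powr (p/2))"
    by (intro sum_mono powr_superadd q) auto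
  also have "\<dots> \<le> (\<Sum>i\<in>UNIV. (A i)\<^sup>2 + (B i)\<^sup>2) powr (p/2)"
    by (intro powr_superadd_sum q) auto
  also have "\<dots> = sqrt (\<Sum>i\<in>UNIV. (A i)\<^sup>2 + (B i)\<^sup>2) powr p"
  proof -
    have S0: "0 \<le> (\<Sum>i\<in>UNIV. (A i)\<^sup>2 + (B i)\<^sup>2)" by (intro sum_nonneg) auto
    show ?thesis using S0 by (simp add: powr_half_sqrt[symmetric] powr_powr)
  qed
  finally show ?thesis .
qed

lemma D_meas:
  fixes u :: "'a::euclidean_space \<Rightarrow> real"
  assumes u: "u \<in> Cc_infty \<Omega>" and F: "F = (\<lambda>\<xi>. b + (\<alpha> * (\<xi> \<bullet> e)) *\<^sub>R c)"
  shows "(\<lambda>\<xi>. frechet_derivative u (at \<xi>) (F \<xi>)) \<in> borel_measurable borel"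
proof -
  define DU where "DU v x = frechet_derivative u (at x) v" for v x
  have cDU: "continuous_on UNIV (DU v)" for v unfolding DU_def by (rule cc_deriv_cont[OF u])
  have mDU[measurable]: "DU v \<in> borel_measurable borel" for v by (rule borel_measurable_continuous_onI[OF cDU])
  have Deq: "frechet_derivative u (at \<xi>) (F \<xi>) = DU b \<xi> + (\<alpha> * (\<xi> \<bullet> e)) * DU c \<xi>" for \<xi>
  proof -
    have lin: "linear (frechet_derivative u (at \<xi>))"
      using cc_diff[OF u] linear_frechet_derivative by blast
    show ?thesis unfolding F DU_def using linear_add[OF lin] linear_scale[OF lin] by simp
  qed
  show ?thesis unfolding Deq by measurable
qed

definition bX :: "'n::finite \<Rightarrow> 'n hpoint" where "bX i = (axis i 1, 0, 0)"
definition bY :: "'n::finite \<Rightarrow> 'n hpoint" where "bY i = (0, axis i 1, 0)"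
definition cT :: "'n::finite hpoint" where "cT = (0, 0, 1)"

lemma inner_facts:
  "bX i \<bullet> bX i = 1" "bY i \<bullet> bY i = 1" "cT \<bullet> cT = 1"
  "bX i \<bullet> cT = 0" "bY i \<bullet> cT = 0" "cT \<bullet> bX i = 0" "cT \<bullet> bY i = 0"
  "bX i \<bullet> bY i = 0" "bY i \<bullet> bX i = 0"
  by (simp_all add: bX_def bY_def cT_def inner_prod_def inner_axis_axis)

lemma hX_eq: "hX i = (\<lambda>\<xi>. bX i + (2 * (\<xi> \<bullet> bY i)) *\<^sub>R cT)"
  by (auto simp: fun_eq_iff hX_def bX_def bY_def cT_def inner_prod_def inner_axis)

lemma hY_eq: "hY i = (\<lambda>\<xi>. bY i + (-2 * (\<xi> \<bullet> bX i)) *\<^sub>R cT)"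
  by (auto simp: fun_eq_iff hY_def bX_def bY_def cT_def inner_prod_def inner_axis)

theorem theorem3p2:
  fixes \<Omega> :: "'n::finite hpoint set"
    and proj :: "'n hpoint \<Rightarrow> 'n hpoint"
    and p :: real
    and u :: "'n hpoint \<Rightarrow> real"
  assumes "open \<Omega>" and "convex \<Omega>" and "\<Omega> \<noteq> {}" and "\<Omega> \<noteq> UNIV"
    and "\<And>\<xi>. \<xi> \<in> \<Omega> \<Longrightarrow> proj \<xi> \<in> frontier \<Omega> \<and> dist \<xi> (proj \<xi>) = infdist \<xi> (frontier \<Omega>)"
    and "p \<ge> 2"
    and "u \<in> Cc_infty \<Omega>"
  shows "(\<integral>\<^sup>+ \<xi>. indicator \<Omega> \<xi> * ennreal ((hgrad_norm u \<xi>) powr p) \<partial>lebesgue)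
         \<ge> ennreal (((p - 1) / p) powr p) *
           (\<integral>\<^sup>+ \<xi>. indicator \<Omega> \<xi> * ennreal (
               (let \<nu> = (proj \<xi> - \<xi>) /\<^sub>R norm (proj \<xi> - \<xi>) in
                 (\<Sum>i\<in>UNIV. \<bar>hX i \<xi> \<bullet> \<nu>\<bar> powr p + \<bar>hY i \<xi> \<bullet> \<nu>\<bar> powr p))
               / (infdist \<xi> (frontier \<Omega>)) powr p * \<bar>u \<xi>\<bar> powr p) \<partial>lebesgue)"
proof -
  note op = assms(1) and cv = assms(2) and pr = assms(5) and p2 = assms(6) and u = assms(7)
  have p: "p > 1" using p2 by simp
  define c0 where "c0 = ennreal (((p - 1) / p) powr p)"
  define K where "K = closure {x. u x \<noteq> 0}"
  have KO: "K \<subseteq> \<Omega>" using cc_supp[OF u] by (simp add: K_def)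
  have Dzero: "frechet_derivative u (at \<xi>) v = 0" if "\<xi> \<notin> \<Omega>" for \<xi> v
    by (rule cc_deriv_zero[OF u]) (use that KO in \<open>auto simp: K_def\<close>)
  define A where "A i \<xi> = ennreal (\<bar>frechet_derivative u (at \<xi>) (hX i \<xi>)\<bar> powr p)" for i \<xi>
  define B where "B i \<xi> = ennreal (\<bar>frechet_derivative u (at \<xi>) (hY i \<xi>)\<bar> powr p)" for i \<xi>
  define WA where "WA i \<xi> = Wf \<Omega> (hX i) p \<xi> * ennreal (\<bar>u \<xi>\<bar> powr p)" for i \<xi>
  define WB where "WB i \<xi> = Wf \<Omega> (hY i) p \<xi> * ennreal (\<bar>u \<xi>\<bar> powr p)" for i \<xi>
  have mu[measurable]: "u \<in> borel_measurable borel" by (rule borel_measurable_continuous_onI[OF cc_cont[OF u]])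
  have mA[measurable]: "A i \<in> borel_measurable borel" for i
  proof -
    have [measurable]: "(\<lambda>\<xi>. frechet_derivative u (at \<xi>) (hX i \<xi>)) \<in> borel_measurable borel"
      by (rule D_meas[OF u hX_eq])
    show ?thesis unfolding A_def by measurable
  qed
  have mB[measurable]: "B i \<in> borel_measurable borel" for i
  proof -
    have [measurable]: "(\<lambda>\<xi>. frechet_derivative u (at \<xi>) (hY i \<xi>)) \<in> borel_measurable borel"
      by (rule D_meas[OF u hY_eq])
    show ?thesis unfolding B_def by measurable
  qed
  have mhX[measurable]: "hX i \<in> borel_measurable borel" for i unfolding hX_eq by measurable
  have mhY[measurable]: "hY i \<in> borel_measurable borel" for i unfolding hY_eq by measurable
  have mWA[measurable]: "WA i \<in> borel_measurable borel" for i
  proof -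
    have [measurable]: "Wf \<Omega> (hX i) p \<in> borel_measurable borel" by (rule Wf_meas[OF op mhX])
    show ?thesis unfolding WA_def by measurable
  qed
  have mWB[measurable]: "WB i \<in> borel_measurable borel" for i
  proof -
    have [measurable]: "Wf \<Omega> (hY i) p \<in> borel_measurable borel" by (rule Wf_meas[OF op mhY])
    show ?thesis unfolding WB_def by measurable
  qed
  have PA: "c0 * (\<integral>\<^sup>+\<xi>. WA i \<xi> \<partial>lborel) \<le> (\<integral>\<^sup>+\<xi>. A i \<xi> \<partial>lborel)" for i
    unfolding c0_def WA_def A_def
    by (rule per_dir[OF op cv u p inner_facts(1,3,4,8,7) hX_eq])
  have PB: "c0 * (\<integral>\<^sup>+\<xi>. WB i \<xi> \<partial>lborel) \<le> (\<integral>\<^sup>+\<xi>. B i \<xi> \<partial>lborel)" for i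
    unfolding c0_def WB_def B_def
    by (rule per_dir[OF op cv u p inner_facts(2,3,5,9,6) hY_eq])
  have S1: "(\<integral>\<^sup>+\<xi>. (\<Sum>i\<in>UNIV. A i \<xi> + B i \<xi>) \<partial>lborel)
      \<le> (\<integral>\<^sup>+ \<xi>. indicator \<Omega> \<xi> * ennreal ((hgrad_norm u \<xi>) powr p) \<partial>lborel)"
  proof (rule nn_integral_mono)
    fix \<xi> :: "'n hpoint"
    show "(\<Sum>i\<in>UNIV. A i \<xi> + B i \<xi>) \<le> indicator \<Omega> \<xi> * ennreal ((hgrad_norm u \<xi>) powr p)"
    proof (cases "\<xi> \<in> \<Omega>")
      case False
      then show ?thesis using p by (simp add: A_def B_def Dzero)
    next
      case True
      have "(\<Sum>i\<in>UNIV. A i \<xi> + B i \<xi>) = ennreal (\<Sum>i\<in>UNIV. \<bar>frechet_derivative u (at \<xi>) (hX i \<xi>)\<bar> powr p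
               + \<bar>frechet_derivative u (at \<xi>) (hY i \<xi>)\<bar> powr p)"
        by (simp add: A_def B_def ennreal_plus[symmetric] del: ennreal_plus)
      also have "\<dots> \<le> ennreal ((hgrad_norm u \<xi>) powr p)"
        unfolding hgrad_norm_def by (intro ennreal_leI grad_bound p2)
      finally show ?thesis using True by simp
    qed
  qed
  have S2: "(\<integral>\<^sup>+\<xi>. (\<Sum>i\<in>UNIV. A i \<xi> + B i \<xi>) \<partial>lborel)
      = (\<Sum>i\<in>UNIV. (\<integral>\<^sup>+\<xi>. A i \<xi> \<partial>lborel) + (\<integral>\<^sup>+\<xi>. B i \<xi> \<partial>lborel))"
    by (subst nn_integral_sum) (auto intro!: sum.cong nn_integral_add)
  have S2': "(\<integral>\<^sup>+\<xi>. (\<Sum>i\<in>UNIV. WA i \<xi> + WB i \<xi>) \<partial>lborel)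
      = (\<Sum>i\<in>UNIV. (\<integral>\<^sup>+\<xi>. WA i \<xi> \<partial>lborel) + (\<integral>\<^sup>+\<xi>. WB i \<xi> \<partial>lborel))"
    by (subst nn_integral_sum) (auto intro!: sum.cong nn_integral_add)
  have S3: "c0 * (\<integral>\<^sup>+\<xi>. (\<Sum>i\<in>UNIV. WA i \<xi> + WB i \<xi>) \<partial>lborel)
      \<le> (\<integral>\<^sup>+\<xi>. (\<Sum>i\<in>UNIV. A i \<xi> + B i \<xi>) \<partial>lborel)"
    unfolding S2 S2' sum_distrib_left distrib_left
    by (intro sum_mono add_mono PA PB)
  have S4: "(\<integral>\<^sup>+ \<xi>. indicator \<Omega> \<xi> * ennreal (
               (let \<nu> = (proj \<xi> - \<xi>) /\<^sub>R norm (proj \<xi> - \<xi>) in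
                 (\<Sum>i\<in>UNIV. \<bar>hX i \<xi> \<bullet> \<nu>\<bar> powr p + \<bar>hY i \<xi> \<bullet> \<nu>\<bar> powr p))
               / (infdist \<xi> (frontier \<Omega>)) powr p * \<bar>u \<xi>\<bar> powr p) \<partial>lborel)
      \<le> (\<integral>\<^sup>+\<xi>. (\<Sum>i\<in>UNIV. WA i \<xi> + WB i \<xi>) \<partial>lborel)"
  proof (rule nn_integral_mono)
    fix \<xi> :: "'n hpoint"
    show "indicator \<Omega> \<xi> * ennreal (
               (let \<nu> = (proj \<xi> - \<xi>) /\<^sub>R norm (proj \<xi> - \<xi>) in
                 (\<Sum>i\<in>UNIV. \<bar>hX i \<xi> \<bullet> \<nu>\<bar> powr p + \<bar>hY i \<xi> \<bullet> \<nu>\<bar> powr p))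
               / (infdist \<xi> (frontier \<Omega>)) powr p * \<bar>u \<xi>\<bar> powr p)
         \<le> (\<Sum>i\<in>UNIV. WA i \<xi> + WB i \<xi>)"
    proof (cases "\<xi> \<in> \<Omega>")
      case False then show ?thesis by simp
    next
      case True
      define ph where "ph = proj \<xi>"
      define D where "D = infdist \<xi> (frontier \<Omega>)"
      define \<nu> where "\<nu> = (ph - \<xi>) /\<^sub>R norm (ph - \<xi>)"
      define U where "U = \<bar>u \<xi>\<bar> powr p"
      have phF: "ph \<in> frontier \<Omega>" and dD: "dist \<xi> ph = D" using pr[OF True] by (auto simp: ph_def D_def)
      have phO: "ph \<notin> \<Omega>" using phF op by (simp add: frontier_def interior_open)
      have nD: "norm (ph - \<xi>) = D" using dD by (simp add: dist_norm norm_minus_commute)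
      have D0: "D > 0" using phO True dD by auto
      have U0: "U \<ge> 0" by (simp add: U_def)
      have low: "ennreal (\<bar>F \<xi> \<bullet> \<nu>\<bar> powr p / D powr p) \<le> Wf \<Omega> F p \<xi>" for F
      proof (rule Wf_lower[OF _ D0])
        fix r assume h: "D \<le> r * (F \<xi> \<bullet> \<nu>)"
        show "\<xi> + r *\<^sub>R F \<xi> \<notin> \<Omega>"
        proof
          assume "\<xi> + r *\<^sub>R F \<xi> \<in> \<Omega>"
          from halfspace[OF op cv True phF _ this] pr[OF True]
          have lt: "(r *\<^sub>R F \<xi>) \<bullet> (ph - \<xi>) < D\<^sup>2" by (simp add: ph_def D_def dD[unfolded D_def ph_def])
          have eq: "(r *\<^sub>R F \<xi>) \<bullet> (ph - \<xi>) = D * (r * (F \<xi> \<bullet> \<nu>))"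
            using D0 nD by (simp add: \<nu>_def inner_commute)
          have "D * (r * (F \<xi> \<bullet> \<nu>)) < D * D" using lt unfolding eq power2_eq_square .
          then have "r * (F \<xi> \<bullet> \<nu>) < D" using D0 by simp
          then show False using h by simp
        qed
      qed (use p in simp)
      have "indicator \<Omega> \<xi> * ennreal (
               (let \<nu> = (proj \<xi> - \<xi>) /\<^sub>R norm (proj \<xi> - \<xi>) in
                 (\<Sum>i\<in>UNIV. \<bar>hX i \<xi> \<bullet> \<nu>\<bar> powr p + \<bar>hY i \<xi> \<bullet> \<nu>\<bar> powr p))
               / (infdist \<xi> (frontier \<Omega>)) powr p * \<bar>u \<xi>\<bar> powr p)
          = ennreal ((\<Sum>i\<in>UNIV. \<bar>hX i \<xi> \<bullet> \<nu>\<bar> powr p + \<bar>hY i \<xi> \<bullet> \<nu>\<bar> powr p) / D powr p * U)"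
        using True by (simp add: Let_def \<nu>_def ph_def D_def U_def)
      also have "\<dots> = ennreal (\<Sum>i\<in>UNIV. \<bar>hX i \<xi> \<bullet> \<nu>\<bar> powr p / D powr p * U + \<bar>hY i \<xi> \<bullet> \<nu>\<bar> powr p / D powr p * U)"
        unfolding sum_divide_distrib sum_distrib_right
        by (intro arg_cong[where f=ennreal] sum.cong refl) (simp add: add_divide_distrib distrib_right)
      also have "\<dots> = (\<Sum>i\<in>UNIV. ennreal (\<bar>hX i \<xi> \<bullet> \<nu>\<bar> powr p / D powr p) * ennreal U
                                + ennreal (\<bar>hY i \<xi> \<bullet> \<nu>\<bar> powr p / D powr p) * ennreal U)"
      proof -
        have "ennreal (\<Sum>i\<in>UNIV. \<bar>hX i \<xi> \<bullet> \<nu>\<bar> powr p / D powr p * U + \<bar>hY i \<xi> \<bullet> \<nu>\<bar> powr p / D powr p * U)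
            = (\<Sum>i\<in>UNIV. ennreal (\<bar>hX i \<xi> \<bullet> \<nu>\<bar> powr p / D powr p * U + \<bar>hY i \<xi> \<bullet> \<nu>\<bar> powr p / D powr p * U))"
          using U0 by (subst sum_ennreal) auto
        also have "\<dots> = (\<Sum>i\<in>UNIV. ennreal (\<bar>hX i \<xi> \<bullet> \<nu>\<bar> powr p / D powr p) * ennreal U
                                + ennreal (\<bar>hY i \<xi> \<bullet> \<nu>\<bar> powr p / D powr p) * ennreal U)"
        proof (intro sum.cong refl)
          fix i
          show "ennreal (\<bar>hX i \<xi> \<bullet> \<nu>\<bar> powr p / D powr p * U + \<bar>hY i \<xi> \<bullet> \<nu>\<bar> powr p / D powr p * U)
              = ennreal (\<bar>hX i \<xi> \<bullet> \<nu>\<bar> powr p / D powr p) * ennreal U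
                                + ennreal (\<bar>hY i \<xi> \<bullet> \<nu>\<bar> powr p / D powr p) * ennreal U"
            using U0 by (simp add: ennreal_mult[symmetric])
        qed
        finally show ?thesis .
      qed
      also have "\<dots> \<le> (\<Sum>i\<in>UNIV. WA i \<xi> + WB i \<xi>)"
        unfolding WA_def WB_def U_def[symmetric]
        by (intro sum_mono add_mono mult_right_mono low) auto
      finally show ?thesis .
    qed
  qed
  have "c0 * (\<integral>\<^sup>+ \<xi>. indicator \<Omega> \<xi> * ennreal (
               (let \<nu> = (proj \<xi> - \<xi>) /\<^sub>R norm (proj \<xi> - \<xi>) in
                 (\<Sum>i\<in>UNIV. \<bar>hX i \<xi> \<bullet> \<nu>\<bar> powr p + \<bar>hY i \<xi> \<bullet> \<nu>\<bar> powr p))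
               / (infdist \<xi> (frontier \<Omega>)) powr p * \<bar>u \<xi>\<bar> powr p) \<partial>lborel)
      \<le> (\<integral>\<^sup>+ \<xi>. indicator \<Omega> \<xi> * ennreal ((hgrad_norm u \<xi>) powr p) \<partial>lborel)"
    using mult_left_mono[OF S4, of c0] S3 S1 by (meson order_trans zero_le)
  then show ?thesis unfolding c0_def by (simp add: nn_integral_completion)
qed

end
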